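(* Let $\mathbb{T}$ be a time scale, $\alpha\in]0,1]$, $t\in\mathbb{T}_\kappa^\kappa$, $\lambda\in\mathbb{R}$, and let $f,g:\mathbb{T}\to\mathbb{R}$ be symmetric fractional differentiable of order $\alpha$ at $t$. Then: (i) $f+g$ is symmetric fractional differentiable of order $\alpha$ at $t$ with $(f+g)^{\diamondsuit^\alpha}(t)=f^{\diamondsuit^\alpha}(t)+g^{\diamondsuit^\alpha}(t)$; (ii) $\lambda f$ is symmetric fractional differentiable of order $\alpha$ at $t$ with $(\lambda f)^{\diamondsuit^\alpha}(t)=\lambda f^{\diamondsuit^\alpha}(t)$; (iii) if $f$ and $g$ are continuous at $t$, then $fg$ is symmetric fractional differentiable of order $\alpha$ at $t$ with $(fg)^{\diamondsuit^\alpha}(t)=f^{\diamondsuit^\alpha}(t)g^\sigma(t)+f^\rho(t)g^{\diamondsuit^\alpha}(t)$; (iv) if $f$ is continuous at $t$ and $f^\sigma(t)f^\rho(t)\neq0$, then $1/f$ is symmetric fractional differentiable of order $\alpha$ at $t$ with $\left(\frac1f\right)^{\diamondsuit^\alpha}(t)=-\frac{f^{\diamondsuit^\alpha}(t)}{f^\sigma(t)f^\rho(t)}$; (v) if $f$ and $g$ are continuous at $t$ and $g^\sigma(t)g^\rho(t)\neq0$, then $f/g$ is symmetric fractional differentiable of order $\alpha$ at $t$ with $$\left(\frac fg\right)^{\diamondsuit^\alpha}(t)=\frac{f^{\diamondsuit^\alpha}(t)g^\rho(t)-f^\rho(t)g^{\diamondsuit^\alpha}(t)}{g^\sigma(t)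g^\rho(t)}.$$
   Context: A time scale $\mathbb{T}$ is a nonempty closed subset of $\mathbb{R}$ with the induced topology. $\sigma(t)=\inf\{s\in\mathbb{T}:s>t\}$ ($\inf\emptyset=\sup\mathbb{T}$), $\rho(t)=\sup\{s\in\mathbb{T}:s<t\}$ ($\sup\emptyset=\inf\mathbb{T}$); $f^\sigma=f\circ\sigma$, $f^\rho=f\circ\rho$. $\mathbb{T}^\kappa=\mathbb{T}\setminus\{\sup\mathbb{T}\}$ if $\sup\mathbb{T}$ is finite and left-scattered, else $\mathbb{T}$; $\mathbb{T}_\kappa=\mathbb{T}\setminus\{\inf\mathbb{T}\}$ if $\inf\mathbb{T}$ is finite and right-scattered, else $\mathbb{T}$; $\mathbb{T}_\kappa^\kappa=\mathbb{T}_\kappa\cap\mathbb{T}^\kappa$. Symmetric fractional derivative of order $\alpha$ at $t\in\mathbb{T}_\kappa^\kappa$: the real number $f^{\diamondsuit^\alpha}(t)$ (if it exists) such that for every $\varepsilon>0$ there is a neighborhood $U\subset\mathbb{T}$ of $t$ with $\big|[f^\sigma(t)-f(s)+f(2t-s)-f^\rho(t)]-f^{\diamondsuit^\alpha}(t)[\sigma(t)+2t-2s-\rho(t)]^\alpha\big|\le\varepsilon|\sigma(t)+2t-2s-\rho(t)|^\alpha$ for all $s\in U$ with $2t-s\in U$; $f$ is then symmetric fractional differentiable of order $\alpha$ at $t$. *)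

theory Defs
  imports "HOL-Analysis.Analysis"
begin

definition time_scale :: "real set \<Rightarrow> bool" where
  "time_scale T \<longleftrightarrow> T \<noteq> {} \<and> closed T"

definition sigma :: "real set \<Rightarrow> real \<Rightarrow> real" where
  "sigma T t = (if {s \<in> T. s > t} = {} then Sup T else Inf {s \<in> T. s > t})"

definition rho :: "real set \<Rightarrow> real \<Rightarrow> real" where
  "rho T t = (if {s \<in> T. s < t} = {} then Inf T else Sup {s \<in> T. s < t})"

definition T_sup_kappa :: "real set \<Rightarrow> real set" where
  "T_sup_kappa T = (if bdd_above T \<and> rho T (Sup T) < Sup T then T - {Sup T} else T)"

definition T_sub_kappa :: "real set \<Rightarrow> real set" where
  "T_sub_kappa T = (if bdd_below T \<and> Inf T < sigma T (Inf T) then T - {Inf T} else T)"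

definition T_kappa_kappa :: "real set \<Rightarrow> real set" where
  "T_kappa_kappa T = T_sub_kappa T \<inter> T_sup_kappa T"

text \<open>Real alpha-th power of a possibly negative base, read as the odd
  (sign preserving) extension of x powr alpha.\<close>
definition frac_pow :: "real \<Rightarrow> real \<Rightarrow> real" where
  "frac_pow \<alpha> x = sgn x * \<bar>x\<bar> powr \<alpha>"

definition has_sym_frac_deriv ::
    "real set \<Rightarrow> real \<Rightarrow> (real \<Rightarrow> real) \<Rightarrow> real \<Rightarrow> real \<Rightarrow> bool" where
  "has_sym_frac_deriv T \<alpha> f t D \<longleftrightarrow>
     (\<forall>\<epsilon>>0. \<exists>U. openin (top_of_set T) U \<and> t \<in> U \<and>
        (\<forall>s\<in>U. 2 * t - s \<in> U \<longrightarrow>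
           \<bar>(f (sigma T t) - f s + f (2 * t - s) - f (rho T t))
             - D * frac_pow \<alpha> (sigma T t + 2 * t - 2 * s - rho T t)\<bar>
           \<le> \<epsilon> * \<bar>sigma T t + 2 * t - 2 * s - rho T t\<bar> powr \<alpha>))"

end

theory Submission
  imports Defs
begin

lemma sigma_ge: assumes "t \<in> T" shows "t \<le> sigma T t"
proof (cases "{s \<in> T. s > t} = {}")
  case True
  then have "\<forall>s\<in>T. s \<le> t" by force
  then have "Sup T = t" using assms by (intro cSup_eq_maximum) auto
  then show ?thesis using True by (simp add: sigma_def)
next
  case False
  then show ?thesis unfolding sigma_def by (auto intro: cInf_greatest)
qed

lemma rho_le: assumes "t \<in> T" shows "rho T t \<le> t"
proof (cases "{s \<in> T. s < t} = {}")
  case True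
  then have "\<forall>s\<in>T. t \<le> s" by force
  then have "Inf T = t" using assms by (intro cInf_eq_minimum) auto
  then show ?thesis using True by (simp add: rho_def)
next
  case False
  then show ?thesis unfolding rho_def by (auto intro: cSup_least)
qed

lemma sigma_gap: assumes "s \<in> T" "t < s" shows "sigma T t \<le> s"
proof -
  have ne: "{s \<in> T. s > t} \<noteq> {}" using assms by auto
  have "Inf {s \<in> T. s > t} \<le> s" using assms
    by (intro cInf_lower) (auto intro: bdd_belowI[where m=t])
  then show ?thesis unfolding sigma_def if_not_P[OF ne] .
qed

lemma rho_gap: assumes "s \<in> T" "s < t" shows "s \<le> rho T t"
proof -
  have ne: "{s \<in> T. s < t} \<noteq> {}" using assms by auto
  have "s \<le> Sup {s \<in> T. s < t}" using assms
    by (intro cSup_upper) (auto intro: bdd_aboveI[where M=t])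
  then show ?thesis unfolding rho_def if_not_P[OF ne] .
qed

lemma gap:
  assumes "t \<in> T" "t < sigma T t \<or> rho T t < t"
  shows "\<exists>\<delta>>0. \<forall>s\<in>T. 2 * t - s \<in> T \<longrightarrow> \<bar>s - t\<bar> < \<delta> \<longrightarrow> s = t"
  using assms(2)
proof
  assume h: "t < sigma T t"
  show ?thesis
  proof (intro exI[of _ "sigma T t - t"] conjI ballI impI)
    fix s assume s: "s \<in> T" "2 * t - s \<in> T" "\<bar>s - t\<bar> < sigma T t - t"
    show "s = t"
    proof (rule ccontr)
      assume "s \<noteq> t"
      then consider "s > t" | "s < t" by linarith
      then show False
      proof cases
        case 1 then show ?thesis using sigma_gap[OF s(1) 1] s(3) by linarith
      next
        case 2 then have g: "2 * t - s > t" by linarith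
        show ?thesis using sigma_gap[OF s(2) g] s(3) 2 by linarith
      qed
    qed
  qed (use h in simp)
next
  assume h: "rho T t < t"
  show ?thesis
  proof (intro exI[of _ "t - rho T t"] conjI ballI impI)
    fix s assume s: "s \<in> T" "2 * t - s \<in> T" "\<bar>s - t\<bar> < t - rho T t"
    show "s = t"
    proof (rule ccontr)
      assume "s \<noteq> t"
      then consider "s > t" | "s < t" by linarith
      then show False
      proof cases
        case 2 then show ?thesis using rho_gap[OF s(1) 2] s(3) by linarith
      next
        case 1 then have g: "2 * t - s < t" by linarith
        show ?thesis using rho_gap[OF s(2) g] s(3) 1 by linarith
      qed
    qed
  qed (use h in simp)
qed

lemma scattered_char:
  assumes d: "\<delta> > 0" "\<forall>s\<in>T. 2 * t - s \<in> T \<longrightarrow> \<bar>s - t\<bar> < \<delta> \<longrightarrow> s = t"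
    and t: "t \<in> T"
  shows "has_sym_frac_deriv T \<alpha> F t D \<longleftrightarrow>
    F (sigma T t) - F (rho T t) = D * frac_pow \<alpha> (sigma T t - rho T t)"
proof
  assume H: "has_sym_frac_deriv T \<alpha> F t D"
  define X where "X = F (sigma T t) - F (rho T t) - D * frac_pow \<alpha> (sigma T t - rho T t)"
  define c where "c = \<bar>sigma T t - rho T t\<bar> powr \<alpha>"
  have c0: "c \<ge> 0" by (simp add: c_def)
  have b: "\<bar>X\<bar> \<le> e * c" if e0: "e > 0" for e
  proof -
    have "\<exists>U. openin (top_of_set T) U \<and> t \<in> U \<and> (\<forall>s\<in>U. 2 * t - s \<in> U \<longrightarrow>
           \<bar>(F (sigma T t) - F s + F (2 * t - s) - F (rho T t))
             - D * frac_pow \<alpha> (sigma T t + 2 * t - 2 * s - rho T t)\<bar>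
           \<le> e * \<bar>sigma T t + 2 * t - 2 * s - rho T t\<bar> powr \<alpha>)"
        using H e0 unfolding has_sym_frac_deriv_def by blast
    then obtain U where U: "t \<in> U" "\<forall>s\<in>U. 2 * t - s \<in> U \<longrightarrow>
           \<bar>(F (sigma T t) - F s + F (2 * t - s) - F (rho T t))
             - D * frac_pow \<alpha> (sigma T t + 2 * t - 2 * s - rho T t)\<bar>
           \<le> e * \<bar>sigma T t + 2 * t - 2 * s - rho T t\<bar> powr \<alpha>" by blast
    have tt: "2 * t - t = t" by simp
    have e2: "sigma T t + 2 * t - 2 * t - rho T t = sigma T t - rho T t" by simp
    have "2 * t - t \<in> U" unfolding tt using U(1) .
    from U(2)[rule_format, OF U(1) this] show ?thesis unfolding tt e2 X_def c_def
      by (smt (verit))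
  qed
  show "F (sigma T t) - F (rho T t) = D * frac_pow \<alpha> (sigma T t - rho T t)"
  proof (rule ccontr)
    assume "\<not> ?thesis"
    then have X0: "\<bar>X\<bar> > 0" by (simp add: X_def)
    have "\<bar>X\<bar> \<le> (\<bar>X\<bar> / (2*(c+1))) * c" using b[of "\<bar>X\<bar> / (2*(c+1))"] X0 c0 by simp
    also have "\<dots> < \<bar>X\<bar>" using X0 c0 by (simp add: field_simps) (intro add_nonneg_pos; simp)
    finally show False by simp
  qed
next
  assume E: "F (sigma T t) - F (rho T t) = D * frac_pow \<alpha> (sigma T t - rho T t)"
  show "has_sym_frac_deriv T \<alpha> F t D"
    unfolding has_sym_frac_deriv_def
  proof (intro allI impI exI[of _ "T \<inter> ball t \<delta>"] conjI ballI)
    show "openin (top_of_set T) (T \<inter> ball t \<delta>)" by (simp add: openin_open_Int)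
    show "t \<in> T \<inter> ball t \<delta>" using t d by simp
    fix e :: real and s assume "e > 0" "s \<in> T \<inter> ball t \<delta>" "2 * t - s \<in> T \<inter> ball t \<delta>"
    then have "s = t" using d by (auto simp: dist_real_def abs_minus_commute)
    have tt: "2 * t - t = t" by simp
    have e2: "sigma T t + 2 * t - 2 * t - rho T t = sigma T t - rho T t" by simp
    have "0 \<le> e * \<bar>sigma T t - rho T t\<bar> powr \<alpha>" using \<open>e > 0\<close> by simp
    then show "\<bar>(F (sigma T t) - F s + F (2 * t - s) - F (rho T t))
             - D * frac_pow \<alpha> (sigma T t + 2 * t - 2 * s - rho T t)\<bar>
           \<le> e * \<bar>sigma T t + 2 * t - 2 * s - rho T t\<bar> powr \<alpha>"
      unfolding \<open>s = t\<close> tt e2 using E by simp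
  qed
qed

lemma has_sum:
  assumes "has_sym_frac_deriv T \<alpha> f t Df" "has_sym_frac_deriv T \<alpha> g t Dg"
  shows "has_sym_frac_deriv T \<alpha> (\<lambda>x. f x + g x) t (Df + Dg)"
  unfolding has_sym_frac_deriv_def
proof (intro allI impI)
  fix e :: real assume e: "e > 0"
  obtain U1 where U1: "openin (top_of_set T) U1" "t \<in> U1" "\<forall>s\<in>U1. 2 * t - s \<in> U1 \<longrightarrow>
           \<bar>(f (sigma T t) - f s + f (2 * t - s) - f (rho T t))
             - Df * frac_pow \<alpha> (sigma T t + 2 * t - 2 * s - rho T t)\<bar>
           \<le> (e/2) * \<bar>sigma T t + 2 * t - 2 * s - rho T t\<bar> powr \<alpha>"
    using assms(1) e unfolding has_sym_frac_deriv_def by (meson half_gt_zero)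
  obtain U2 where U2: "openin (top_of_set T) U2" "t \<in> U2" "\<forall>s\<in>U2. 2 * t - s \<in> U2 \<longrightarrow>
           \<bar>(g (sigma T t) - g s + g (2 * t - s) - g (rho T t))
             - Dg * frac_pow \<alpha> (sigma T t + 2 * t - 2 * s - rho T t)\<bar>
           \<le> (e/2) * \<bar>sigma T t + 2 * t - 2 * s - rho T t\<bar> powr \<alpha>"
    using assms(2) e unfolding has_sym_frac_deriv_def by (meson half_gt_zero)
  show "\<exists>U. openin (top_of_set T) U \<and> t \<in> U \<and>
        (\<forall>s\<in>U. 2 * t - s \<in> U \<longrightarrow>
           \<bar>((f (sigma T t) + g (sigma T t)) - (f s + g s) + (f (2 * t - s) + g (2 * t-s)) - (f (rho T t) + g (rho T t)))
             - (Df + Dg) * frac_pow \<alpha> (sigma T t + 2 * t - 2 * s - rho T t)\<bar>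
           \<le> e * \<bar>sigma T t + 2 * t - 2 * s - rho T t\<bar> powr \<alpha>)"
  proof (intro exI[of _ "U1 \<inter> U2"] conjI ballI impI)
    show "openin (top_of_set T) (U1 \<inter> U2)" using U1 U2 by blast
    show "t \<in> U1 \<inter> U2" using U1 U2 by blast
    fix s assume s: "s \<in> U1 \<inter> U2" "2 * t - s \<in> U1 \<inter> U2"
    have a: "\<bar>(f (sigma T t) - f s + f (2 * t - s) - f (rho T t))
             - Df * frac_pow \<alpha> (sigma T t + 2 * t - 2 * s - rho T t)\<bar>
           \<le> (e/2) * \<bar>sigma T t + 2 * t - 2 * s - rho T t\<bar> powr \<alpha>" using U1(3) s by blast
    have b: "\<bar>(g (sigma T t) - g s + g (2 * t - s) - g (rho T t))
             - Dg * frac_pow \<alpha> (sigma T t + 2 * t - 2 * s - rho T t)\<bar>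
           \<le> (e/2) * \<bar>sigma T t + 2 * t - 2 * s - rho T t\<bar> powr \<alpha>" using U2(3) s by blast
    show "\<bar>((f (sigma T t) + g (sigma T t)) - (f s + g s) + (f (2 * t - s) + g (2 * t-s)) - (f (rho T t) + g (rho T t)))
             - (Df + Dg) * frac_pow \<alpha> (sigma T t + 2 * t - 2 * s - rho T t)\<bar>
           \<le> e * \<bar>sigma T t + 2 * t - 2 * s - rho T t\<bar> powr \<alpha>"
      using abs_triangle_ineq[of "(f (sigma T t) - f s + f (2 * t - s) - f (rho T t))
             - Df * frac_pow \<alpha> (sigma T t + 2 * t - 2 * s - rho T t)" "(g (sigma T t) - g s + g (2 * t - s) - g (rho T t))
             - Dg * frac_pow \<alpha> (sigma T t + 2 * t - 2 * s - rho T t)"] a b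
      by (simp add: algebra_simps)
  qed
qed

lemma has_scal:
  assumes "has_sym_frac_deriv T \<alpha> f t Df"
  shows "has_sym_frac_deriv T \<alpha> (\<lambda>x. c * f x) t (c * Df)"
  unfolding has_sym_frac_deriv_def
proof (intro allI impI)
  fix e :: real assume e: "e > 0"
  have e': "e / (\<bar>c\<bar>+1) > 0" using e by simp
  obtain U1 where U1: "openin (top_of_set T) U1" "t \<in> U1" "\<forall>s\<in>U1. 2 * t - s \<in> U1 \<longrightarrow>
           \<bar>(f (sigma T t) - f s + f (2 * t - s) - f (rho T t))
             - Df * frac_pow \<alpha> (sigma T t + 2 * t - 2 * s - rho T t)\<bar>
           \<le> (e / (\<bar>c\<bar>+1)) * \<bar>sigma T t + 2 * t - 2 * s - rho T t\<bar> powr \<alpha>"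
    using assms(1) e' unfolding has_sym_frac_deriv_def by blast
  show "\<exists>U. openin (top_of_set T) U \<and> t \<in> U \<and>
        (\<forall>s\<in>U. 2 * t - s \<in> U \<longrightarrow>
           \<bar>(c * f (sigma T t) - c * f s + c * f (2 * t - s) - c * f (rho T t))
             - (c * Df) * frac_pow \<alpha> (sigma T t + 2 * t - 2 * s - rho T t)\<bar>
           \<le> e * \<bar>sigma T t + 2 * t - 2 * s - rho T t\<bar> powr \<alpha>)"
  proof (intro exI[of _ "U1"] conjI ballI impI)
    show "openin (top_of_set T) U1" "t \<in> U1" using U1 by auto
    fix s assume s: "s \<in> U1" "2 * t - s \<in> U1"
    define X where "X = (f (sigma T t) - f s + f (2 * t - s) - f (rho T t))
             - Df * frac_pow \<alpha> (sigma T t + 2 * t - 2 * s - rho T t)"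
    define k where "k = \<bar>sigma T t + 2 * t - 2 * s - rho T t\<bar> powr \<alpha>"
    have a: "\<bar>X\<bar> \<le> (e / (\<bar>c\<bar>+1)) * k" using U1(3) s unfolding X_def k_def by blast
    have k0: "k \<ge> 0" by (simp add: k_def)
    have "\<bar>c * X\<bar> = \<bar>c\<bar> * \<bar>X\<bar>" by (simp add: abs_mult)
    also have "\<dots> \<le> \<bar>c\<bar> * ((e / (\<bar>c\<bar>+1)) * k)" by (rule mult_left_mono[OF a]) simp
    also have "\<dots> \<le> e * k" using e k0
      by (simp add: field_simps mult_left_mono mult_right_mono)
    finally have "\<bar>c * X\<bar> \<le> e * k" .
    then show "\<bar>(c * f (sigma T t) - c * f s + c * f (2 * t - s) - c * f (rho T t))
             - (c * Df) * frac_pow \<alpha> (sigma T t + 2 * t - 2 * s - rho T t)\<bar>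
           \<le> e * \<bar>sigma T t + 2 * t - 2 * s - rho T t\<bar> powr \<alpha>"
      unfolding X_def k_def by (simp add: algebra_simps)
  qed
qed

lemma dense_form:
  assumes "sigma T t = t" "rho T t = t"
  shows "has_sym_frac_deriv T \<alpha> F t D \<longleftrightarrow>
    (\<forall>e>0. \<exists>U. openin (top_of_set T) U \<and> t \<in> U \<and>
       (\<forall>s\<in>U. 2 * t - s \<in> U \<longrightarrow>
         abs (F (2 * t - s) - F s - D * frac_pow \<alpha> (2 * t - 2 * s)) \<le> e * abs (2 * t - 2 * s) powr \<alpha>))"
  unfolding has_sym_frac_deriv_def assms by (simp add: algebra_simps)

lemma abs_frac_pow: "\<bar>frac_pow \<alpha> x\<bar> = \<bar>x\<bar> powr \<alpha>"
  by (simp add: frac_pow_def abs_mult abs_sgn_eq)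

lemma prod_est:
  fixes Fu Fs Gu Gs Ft Gt Df Dg p k e1 \<eta> :: real
  assumes f: "\<bar>Fu - Fs - Df * p\<bar> \<le> e1 * k" and g: "\<bar>Gu - Gs - Dg * p\<bar> \<le> e1 * k"
    and p: "\<bar>p\<bar> = k" and e1: "e1 \<le> 1" "0 \<le> e1" and n: "\<bar>Gu - Gt\<bar> \<le> \<eta>" "\<bar>Fs - Ft\<bar> \<le> \<eta>"
    and "0 \<le> \<eta>" "0 \<le> k"
  shows "\<bar>Fu * Gu - Fs * Gs - (Df * Gt + Ft * Dg) * p\<bar> \<le> (e1 * (\<bar>Gt\<bar> + \<bar>Ft\<bar>) + \<eta> * (\<bar>Df\<bar> + \<bar>Dg\<bar> + 2)) * k"
proof -
  have fb: "\<bar>Fu - Fs\<bar> \<le> (\<bar>Df\<bar> + 1) * k"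
  proof -
    have "\<bar>Fu - Fs\<bar> \<le> \<bar>Fu - Fs - Df * p\<bar> + \<bar>Df * p\<bar>" by linarith
    also have "\<dots> \<le> e1 * k + \<bar>Df\<bar> * k" using f p by (simp add: abs_mult)
    also have "\<dots> \<le> (\<bar>Df\<bar> + 1) * k" using mult_right_mono[OF e1(1) assms(9)] by (simp add: algebra_simps)
    finally show ?thesis .
  qed
  have gb: "\<bar>Gu - Gs\<bar> \<le> (\<bar>Dg\<bar> + 1) * k"
  proof -
    have "\<bar>Gu - Gs\<bar> \<le> \<bar>Gu - Gs - Dg * p\<bar> + \<bar>Dg * p\<bar>" by linarith
    also have "\<dots> \<le> e1 * k + \<bar>Dg\<bar> * k" using g p by (simp add: abs_mult)
    also have "\<dots> \<le> (\<bar>Dg\<bar> + 1) * k" using mult_right_mono[OF e1(1) assms(9)] by (simp add: algebra_simps)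
    finally show ?thesis .
  qed
  have id: "Fu * Gu - Fs * Gs - (Df * Gt + Ft * Dg) * p =
    (Fu - Fs - Df * p) * Gt + Ft * (Gu - Gs - Dg * p) + (Fu - Fs) * (Gu - Gt) + (Fs - Ft) * (Gu - Gs)"
    by (simp add: algebra_simps)
  have t1: "\<bar>(Fu - Fs - Df * p) * Gt\<bar> \<le> e1 * k * \<bar>Gt\<bar>"
    using f by (simp add: abs_mult mult_right_mono)
  have t2: "\<bar>Ft * (Gu - Gs - Dg * p)\<bar> \<le> \<bar>Ft\<bar> * (e1 * k)"
    using g by (simp add: abs_mult mult_left_mono)
  have t3: "\<bar>(Fu - Fs) * (Gu - Gt)\<bar> \<le> (\<bar>Df\<bar> + 1) * k * \<eta>"
    unfolding abs_mult using fb n(1) by (intro mult_mono) auto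
  have t4: "\<bar>(Fs - Ft) * (Gu - Gs)\<bar> \<le> \<eta> * ((\<bar>Dg\<bar> + 1) * k)"
    unfolding abs_mult using gb n(2) assms(8) by (intro mult_mono) auto
  have "\<bar>Fu * Gu - Fs * Gs - (Df * Gt + Ft * Dg) * p\<bar> \<le>
     e1 * k * \<bar>Gt\<bar> + \<bar>Ft\<bar> * (e1 * k) + (\<bar>Df\<bar> + 1) * k * \<eta> + \<eta> * ((\<bar>Dg\<bar> + 1) * k)"
    unfolding id using t1 t2 t3 t4 abs_triangle_ineq by (smt (verit))
  also have "\<dots> = (e1 * (\<bar>Gt\<bar> + \<bar>Ft\<bar>) + \<eta> * (\<bar>Df\<bar> + \<bar>Dg\<bar> + 2)) * k" by (simp add: algebra_simps)
  finally show ?thesis .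
qed

lemma inv_est:
  fixes Fu Fs Ft Df p k e1 \<eta> M :: real
  assumes f: "\<bar>Fu - Fs - Df * p\<bar> \<le> e1 * k"
    and p: "\<bar>p\<bar> = k" and n: "\<bar>Fs - Ft\<bar> \<le> \<eta>" "\<bar>Fu - Ft\<bar> \<le> \<eta>"
    and M: "M = \<bar>Ft\<bar>" "M > 0" and nM: "\<eta> \<le> M / 2"
    and "0 \<le> e1" "0 \<le> \<eta>" "0 \<le> k"
  shows "\<bar>1 / Fu - 1 / Fs - (- Df / (Ft * Ft)) * p\<bar> \<le> 4 / M^2 * (e1 + 3 * \<bar>Df\<bar> * \<eta> / M) * k"
proof -
  have Fs: "\<bar>Fs\<bar> \<ge> M / 2" using n M nM by linarith
  have Fu: "\<bar>Fu\<bar> \<ge> M / 2" using n M nM by linarith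
  have Fu2: "\<bar>Fu\<bar> \<le> M + \<eta>" using n M by linarith
  have FsFu: "\<bar>Fs * Fu\<bar> \<ge> M^2 / 4"
  proof -
    have "(M/2) * (M/2) \<le> \<bar>Fs\<bar> * \<bar>Fu\<bar>" using Fs Fu M by (intro mult_mono) auto
    then show ?thesis by (simp add: abs_mult power2_eq_square)
  qed
  have nz: "Fs \<noteq> 0" "Fu \<noteq> 0" "Ft \<noteq> 0" using Fs Fu M by auto
  have dif: "\<bar>Fs * Fu - Ft * Ft\<bar> \<le> 3 * M * \<eta>"
  proof -
    have "Fs * Fu - Ft * Ft = (Fs - Ft) * Fu + Ft * (Fu - Ft)" by (simp add: algebra_simps)
    then have "\<bar>Fs * Fu - Ft * Ft\<bar> \<le> \<bar>Fs - Ft\<bar> * \<bar>Fu\<bar> + \<bar>Ft\<bar> * \<bar>Fu - Ft\<bar>"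
      using abs_triangle_ineq[of "(Fs-Ft)*Fu" "Ft*(Fu-Ft)"] by (simp add: abs_mult)
    also have "\<dots> \<le> \<eta> * (M + \<eta>) + M * \<eta>"
      using n Fu2 M by (intro add_mono mult_mono) auto
    also have "\<dots> \<le> 3 * M * \<eta>" using nM assms(9) M
      by (simp add: algebra_simps) (smt (verit) mult_left_mono)
    finally show ?thesis .
  qed
  define X where "X = - (Fu - Fs - Df * p) + Df * p * ((Fs * Fu - Ft * Ft) / (Ft * Ft))"
  have id: "1 / Fu - 1 / Fs - (- Df / (Ft * Ft)) * p = X / (Fs * Fu)"
    unfolding X_def using nz by (simp add: field_simps)
  have Xb: "\<bar>X\<bar> \<le> (e1 + 3 * \<bar>Df\<bar> * \<eta> / M) * k"
  proof -
    have "\<bar>X\<bar> \<le> \<bar>Fu - Fs - Df * p\<bar> + \<bar>Df\<bar> * k * (\<bar>Fs * Fu - Ft * Ft\<bar> / M^2)"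
    proof -
      have q: "\<bar>Df * p * ((Fs * Fu - Ft * Ft) / (Ft * Ft))\<bar> = \<bar>Df\<bar> * k * (\<bar>Fs * Fu - Ft * Ft\<bar> / M^2)"
        using p M by (simp add: abs_mult abs_divide power2_eq_square)
      show ?thesis unfolding X_def
        using abs_triangle_ineq[of "- (Fu - Fs - Df * p)" "Df * p * ((Fs * Fu - Ft * Ft) / (Ft * Ft))"] q
          abs_minus_cancel[of "Fu - Fs - Df * p"]
        by linarith
    qed
    also have "\<dots> \<le> e1 * k + \<bar>Df\<bar> * k * (3 * M * \<eta> / M^2)"
      using f dif M assms(10) by (intro add_mono mult_left_mono divide_right_mono) auto
    also have "\<dots> = (e1 + 3 * \<bar>Df\<bar> * \<eta> / M) * k" using M by (simp add: field_simps power2_eq_square)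
    finally show ?thesis .
  qed
  have "\<bar>X / (Fs * Fu)\<bar> = \<bar>X\<bar> / \<bar>Fs * Fu\<bar>" by (simp add: abs_divide)
  also have "\<dots> \<le> \<bar>X\<bar> / (M^2/4)" using FsFu M nz by (intro divide_left_mono) auto
  also have "\<dots> = 4 / M^2 * \<bar>X\<bar>" by simp
  also have "\<dots> \<le> 4 / M^2 * ((e1 + 3 * \<bar>Df\<bar> * \<eta> / M) * k)" using Xb by (intro mult_left_mono) auto
  finally show ?thesis unfolding id by (metis mult.assoc)
qed

definition good :: "real set \<Rightarrow> real \<Rightarrow> (real \<Rightarrow> real) \<Rightarrow> real \<Rightarrow> real \<Rightarrow> real \<Rightarrow> real set \<Rightarrow> bool" where
  "good T \<alpha> F t D e U \<longleftrightarrow> openin (top_of_set T) U \<and> t \<in> U \<and>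
       (\<forall>s\<in>U. 2 * t - s \<in> U \<longrightarrow>
         abs (F (2 * t - s) - F s - D * frac_pow \<alpha> (2 * t - 2 * s)) \<le> e * abs (2 * t - 2 * s) powr \<alpha>)"

lemma dense_good:
  assumes "sigma T t = t" "rho T t = t"
  shows "has_sym_frac_deriv T \<alpha> F t D \<longleftrightarrow> (\<forall>e>0. \<exists>U. good T \<alpha> F t D e U)"
  unfolding dense_form[OF assms] good_def by blast

lemma cont_eps:
  fixes F :: "real \<Rightarrow> real"
  assumes "continuous (at t within T) F" "\<eta> > 0"
  obtains d where "d > 0" "\<forall>x\<in>T. \<bar>x - t\<bar> < d \<longrightarrow> \<bar>F x - F t\<bar> < \<eta>"
proof -
  have "\<exists>d>0. \<forall>x\<in>T. dist x t < d \<longrightarrow> dist (F x) (F t) < \<eta>"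
    using assms unfolding continuous_within_eps_delta by blast
  then show ?thesis using that unfolding dist_real_def by blast
qed

lemma dense_prod:
  assumes d: "sigma T t = t" "rho T t = t"
    and F: "has_sym_frac_deriv T \<alpha> F t Df" and G: "has_sym_frac_deriv T \<alpha> G t Dg"
    and cF: "continuous (at t within T) F" and cG: "continuous (at t within T) G" and tT: "t \<in> T"
  shows "has_sym_frac_deriv T \<alpha> (\<lambda>x. F x * G x) t (Df * G t + F t * Dg)"
  unfolding dense_good[OF d]
proof (intro allI impI)
  fix e :: real assume e: "e > 0"
  define A where "A = \<bar>G t\<bar> + \<bar>F t\<bar>"
  define B where "B = \<bar>Df\<bar> + \<bar>Dg\<bar> + 2"
  define e1 where "e1 = min 1 (e / (2 * (A + 1)))"
  define \<eta> where "\<eta> = e / (2 * B)"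
  have A0: "A \<ge> 0" and B0: "B > 0" unfolding A_def B_def by auto
  have e1: "e1 > 0" "e1 \<le> 1" "e1 \<le> e / (2 * (A + 1))" using e A0 unfolding e1_def by auto
  have \<eta>: "\<eta> > 0" using e B0 unfolding \<eta>_def by auto
  obtain U1 where U1: "good T \<alpha> F t Df e1 U1" using F e1(1) unfolding dense_good[OF d] by blast
  obtain U2 where U2: "good T \<alpha> G t Dg e1 U2" using G e1(1) unfolding dense_good[OF d] by blast
  obtain d1 where d1: "d1 > 0" "\<forall>x\<in>T. \<bar>x - t\<bar> < d1 \<longrightarrow> \<bar>F x - F t\<bar> < \<eta>" using cont_eps[OF cF \<eta>] by blast
  obtain d2 where d2: "d2 > 0" "\<forall>x\<in>T. \<bar>x - t\<bar> < d2 \<longrightarrow> \<bar>G x - G t\<bar> < \<eta>" using cont_eps[OF cG \<eta>] by blast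
  define U where "U = U1 \<inter> U2 \<inter> (T \<inter> ball t (min d1 d2))"
  show "\<exists>U. good T \<alpha> (\<lambda>x. F x * G x) t (Df * G t + F t * Dg) e U"
    unfolding good_def
  proof (intro exI[of _ U] conjI ballI impI)
    have ob: "openin (top_of_set T) (T \<inter> ball t (min d1 d2))" by (simp add: openin_open_Int)
    show "openin (top_of_set T) U" unfolding U_def using U1 U2 ob unfolding good_def
      by (metis openin_Int)
    show "t \<in> U" unfolding U_def using U1 U2 d1 d2 tT unfolding good_def by auto
    fix s assume s: "s \<in> U" "2 * t - s \<in> U"
    define u where "u = 2 * t - s"
    define p where "p = frac_pow \<alpha> (2 * t - 2 * s)"
    define k where "k = \<bar>2 * t - 2 * s\<bar> powr \<alpha>"
    have hf: "\<bar>F u - F s - Df * p\<bar> \<le> e1 * k" using U1 s unfolding good_def U_def u_def p_def k_def by blast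
    have hg: "\<bar>G u - G s - Dg * p\<bar> \<le> e1 * k" using U2 s unfolding good_def U_def u_def p_def k_def by blast
    have sT: "s \<in> T" "\<bar>s - t\<bar> < d1" "\<bar>s - t\<bar> < d2" using s(1) unfolding U_def by (auto simp: dist_real_def)
    have uT: "u \<in> T" "\<bar>u - t\<bar> < d1" "\<bar>u - t\<bar> < d2" using s(2) unfolding U_def u_def by (auto simp: dist_real_def)
    have n1: "\<bar>G u - G t\<bar> \<le> \<eta>" using d2 uT by force
    have n2: "\<bar>F s - F t\<bar> \<le> \<eta>" using d1 sT by force
    have pk: "\<bar>p\<bar> = k" unfolding p_def k_def by (rule abs_frac_pow)
    have k0: "k \<ge> 0" unfolding k_def by simp
    have est: "\<bar>F u * G u - F s * G s - (Df * G t + F t * Dg) * p\<bar> \<le> (e1 * A + \<eta> * B) * k"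
      unfolding A_def B_def by (rule prod_est[OF hf hg pk e1(2) less_imp_le[OF e1(1)] n1 n2 less_imp_le[OF \<eta>] k0])
    have "e1 * A \<le> e / (2 * (A + 1)) * A" using e1(3) A0 by (rule mult_right_mono)
    also have "\<dots> \<le> e / 2" using e A0 by (simp add: field_simps)
    finally have a1: "e1 * A \<le> e / 2" .
    have a2: "\<eta> * B = e / 2" unfolding \<eta>_def using B0 by simp
    have "(e1 * A + \<eta> * B) * k \<le> e * k" using a1 a2 k0 by (intro mult_right_mono) auto
    with est show "\<bar>F (2 * t - s) * G (2 * t - s) - F s * G s - (Df * G t + F t * Dg) * frac_pow \<alpha> (2 * t - 2 * s)\<bar>
         \<le> e * \<bar>2 * t - 2 * s\<bar> powr \<alpha>" unfolding u_def p_def k_def by linarith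
  qed
qed

lemma aux_comp:
  fixes M r q e :: real
  assumes "M > 0" "r > 0"
  shows "4 / M^2 * (3 * q * (e * M^3 / (24 * r)) / M) = e / 2 * (q / r)"
  using assms by (simp add: field_simps power2_eq_square power3_eq_cube)

lemma dense_inv:
  assumes d: "sigma T t = t" "rho T t = t"
    and F: "has_sym_frac_deriv T \<alpha> F t Df"
    and cF: "continuous (at t within T) F" and nz: "F t \<noteq> 0" and tT: "t \<in> T"
  shows "has_sym_frac_deriv T \<alpha> (\<lambda>x. 1 / F x) t (- Df / (F t * F t))"
  unfolding dense_good[OF d]
proof (intro allI impI)
  fix e :: real assume e: "e > 0"
  define M where "M = \<bar>F t\<bar>"
  have M: "M > 0" using nz unfolding M_def by simp
  define e1 where "e1 = e * M^2 / 8"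
  define \<eta> where "\<eta> = min (M / 2) (e * M^3 / (24 * (\<bar>Df\<bar> + 1)))"
  have e1: "e1 > 0" using e M unfolding e1_def by simp
  have \<eta>: "\<eta> > 0" using e M unfolding \<eta>_def by simp
  obtain U1 where U1: "good T \<alpha> F t Df e1 U1" using F e1(1) unfolding dense_good[OF d] by blast
  obtain d1 where d1: "d1 > 0" "\<forall>x\<in>T. \<bar>x - t\<bar> < d1 \<longrightarrow> \<bar>F x - F t\<bar> < \<eta>" using cont_eps[OF cF \<eta>] by blast
  define U where "U = U1 \<inter> (T \<inter> ball t d1)"
  show "\<exists>U. good T \<alpha> (\<lambda>x. 1 / F x) t (- Df / (F t * F t)) e U"
    unfolding good_def
  proof (intro exI[of _ U] conjI ballI impI)
    have ob: "openin (top_of_set T) (T \<inter> ball t d1)" by (simp add: openin_open_Int)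
    show "openin (top_of_set T) U" unfolding U_def using U1 ob unfolding good_def
      by (metis openin_Int)
    show "t \<in> U" unfolding U_def using U1 d1 tT unfolding good_def by auto
    fix s assume s: "s \<in> U" "2 * t - s \<in> U"
    define u where "u = 2 * t - s"
    define p where "p = frac_pow \<alpha> (2 * t - 2 * s)"
    define k where "k = \<bar>2 * t - 2 * s\<bar> powr \<alpha>"
    have hf: "\<bar>F u - F s - Df * p\<bar> \<le> e1 * k" using U1 s unfolding good_def U_def u_def p_def k_def by blast
    have sT: "s \<in> T" "\<bar>s - t\<bar> < d1" using s(1) unfolding U_def by (auto simp: dist_real_def)
    have uT: "u \<in> T" "\<bar>u - t\<bar> < d1" using s(2) unfolding U_def u_def by (auto simp: dist_real_def)
    have n1: "\<bar>F u - F t\<bar> \<le> \<eta>" using d1 uT by force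
    have n2: "\<bar>F s - F t\<bar> \<le> \<eta>" using d1 sT by force
    have pk: "\<bar>p\<bar> = k" unfolding p_def k_def by (rule abs_frac_pow)
    have k0: "k \<ge> 0" unfolding k_def by simp
    have nM: "\<eta> \<le> M / 2" unfolding \<eta>_def by (rule min.cobounded1)
    have est: "\<bar>1 / F u - 1 / F s - (- Df / (F t * F t)) * p\<bar> \<le> 4 / M^2 * (e1 + 3 * \<bar>Df\<bar> * \<eta> / M) * k"
      by (rule inv_est[OF hf pk n2 n1 M_def M nM less_imp_le[OF e1] less_imp_le[OF \<eta>] k0])
    have c1: "4 / M^2 * e1 = e / 2" unfolding e1_def using M by (simp add: field_simps)
    have "\<eta> \<le> e * M^3 / (24 * (\<bar>Df\<bar> + 1))" unfolding \<eta>_def by simp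
    then have "4 / M^2 * (3 * \<bar>Df\<bar> * \<eta> / M) \<le> 4 / M^2 * (3 * \<bar>Df\<bar> * (e * M^3 / (24 * (\<bar>Df\<bar> + 1))) / M)"
      using M by (intro mult_left_mono divide_right_mono) auto
    also have "\<dots> = e / 2 * (\<bar>Df\<bar> / (\<bar>Df\<bar> + 1))"
    proof -
      have hD: "\<bar>Df\<bar> + 1 > 0" by simp
      show ?thesis using aux_comp[OF M hD, of "\<bar>Df\<bar>" e] .
    qed
    also have "\<dots> \<le> e / 2 * 1" using e by (intro mult_left_mono) auto
    finally have c2: "4 / M^2 * (3 * \<bar>Df\<bar> * \<eta> / M) \<le> e / 2" by simp
    have "4 / M^2 * (e1 + 3 * \<bar>Df\<bar> * \<eta> / M) \<le> e" using c1 c2 by (simp add: distrib_left)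
    then have "4 / M^2 * (e1 + 3 * \<bar>Df\<bar> * \<eta> / M) * k \<le> e * k" using k0 by (rule mult_right_mono)
    with est show "\<bar>1 / F (2 * t - s) - 1 / F s - (- Df / (F t * F t)) * frac_pow \<alpha> (2 * t - 2 * s)\<bar>
         \<le> e * \<bar>2 * t - 2 * s\<bar> powr \<alpha>" unfolding u_def p_def k_def by linarith
  qed
qed

lemma not_dense_gap:
  assumes "t \<in> T" "\<not> (sigma T t = t \<and> rho T t = t)"
  obtains \<delta> where "\<delta> > 0" "\<forall>s\<in>T. 2 * t - s \<in> T \<longrightarrow> \<bar>s - t\<bar> < \<delta> \<longrightarrow> s = t"
proof -
  have "t < sigma T t \<or> rho T t < t" using assms sigma_ge[OF assms(1)] rho_le[OF assms(1)] by linarith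
  then show ?thesis using gap[OF assms(1)] that by blast
qed

lemma has_prod:
  assumes tT: "t \<in> T"
    and F: "has_sym_frac_deriv T \<alpha> F t Df" and G: "has_sym_frac_deriv T \<alpha> G t Dg"
    and c: "sigma T t = t \<and> rho T t = t \<longrightarrow> continuous (at t within T) F \<and> continuous (at t within T) G"
  shows "has_sym_frac_deriv T \<alpha> (\<lambda>x. F x * G x) t (Df * G (sigma T t) + F (rho T t) * Dg)"
proof (cases "sigma T t = t \<and> rho T t = t")
  case True
  then have d: "sigma T t = t" "rho T t = t" by auto
  show ?thesis unfolding d using dense_prod[OF d F G _ _ tT] c True by auto
next
  case False
  obtain \<delta> where g: "\<delta> > 0" "\<forall>s\<in>T. 2 * t - s \<in> T \<longrightarrow> \<bar>s - t\<bar> < \<delta> \<longrightarrow> s = t"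
    using not_dense_gap[OF tT False] by blast
  note ch = scattered_char[OF g tT]
  have f1: "F (sigma T t) - F (rho T t) = Df * frac_pow \<alpha> (sigma T t - rho T t)" using F ch by blast
  have g1: "G (sigma T t) - G (rho T t) = Dg * frac_pow \<alpha> (sigma T t - rho T t)" using G ch by blast
  have "F (sigma T t) * G (sigma T t) - F (rho T t) * G (rho T t) =
    (F (sigma T t) - F (rho T t)) * G (sigma T t) + F (rho T t) * (G (sigma T t) - G (rho T t))"
    by (simp add: algebra_simps)
  also have "\<dots> = (Df * G (sigma T t) + F (rho T t) * Dg) * frac_pow \<alpha> (sigma T t - rho T t)"
    unfolding f1 g1 by (simp add: algebra_simps)
  finally show ?thesis using ch by blast
qed

lemma has_inv:
  assumes tT: "t \<in> T"
    and F: "has_sym_frac_deriv T \<alpha> F t Df"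
    and c: "sigma T t = t \<and> rho T t = t \<longrightarrow> continuous (at t within T) F"
    and nz: "F (sigma T t) * F (rho T t) \<noteq> 0"
  shows "has_sym_frac_deriv T \<alpha> (\<lambda>x. 1 / F x) t (- Df / (F (sigma T t) * F (rho T t)))"
proof (cases "sigma T t = t \<and> rho T t = t")
  case True
  then have d: "sigma T t = t" "rho T t = t" by auto
  have "F t \<noteq> 0" using nz d by auto
  then show ?thesis unfolding d using dense_inv[OF d F _ _ tT] c True by auto
next
  case False
  obtain \<delta> where g: "\<delta> > 0" "\<forall>s\<in>T. 2 * t - s \<in> T \<longrightarrow> \<bar>s - t\<bar> < \<delta> \<longrightarrow> s = t"
    using not_dense_gap[OF tT False] by blast
  note ch = scattered_char[OF g tT]
  have f1: "F (sigma T t) - F (rho T t) = Df * frac_pow \<alpha> (sigma T t - rho T t)" using F ch by blast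
  have n1: "F (sigma T t) \<noteq> 0" "F (rho T t) \<noteq> 0" using nz by auto
  have "1 / F (sigma T t) - 1 / F (rho T t) = - (F (sigma T t) - F (rho T t)) / (F (sigma T t) * F (rho T t))"
    using n1 by (simp add: field_simps)
  also have "\<dots> = (- Df / (F (sigma T t) * F (rho T t))) * frac_pow \<alpha> (sigma T t - rho T t)"
    unfolding f1 by simp
  finally show ?thesis using ch by blast
qed

theorem theorem3p26:
  fixes T :: "real set" and \<alpha> c t Df Dg :: real and f g :: "real \<Rightarrow> real"
  assumes "time_scale T"
    and "0 < \<alpha>" and "\<alpha> \<le> 1"
    and "t \<in> T_kappa_kappa T"
    and "has_sym_frac_deriv T \<alpha> f t Df"
    and "has_sym_frac_deriv T \<alpha> g t Dg"
  shows "has_sym_frac_deriv T \<alpha> (\<lambda>x. f x + g x) t (Df + Dg)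
    \<and> has_sym_frac_deriv T \<alpha> (\<lambda>x. c * f x) t (c * Df)
    \<and> (continuous (at t within T) f \<and> continuous (at t within T) g \<longrightarrow>
         has_sym_frac_deriv T \<alpha> (\<lambda>x. f x * g x) t
           (Df * g (sigma T t) + f (rho T t) * Dg))
    \<and> (continuous (at t within T) f \<and> f (sigma T t) * f (rho T t) \<noteq> 0 \<longrightarrow>
         has_sym_frac_deriv T \<alpha> (\<lambda>x. 1 / f x) t
           (- Df / (f (sigma T t) * f (rho T t))))
    \<and> (continuous (at t within T) f \<and> continuous (at t within T) g \<and>
         g (sigma T t) * g (rho T t) \<noteq> 0 \<longrightarrow>
         has_sym_frac_deriv T \<alpha> (\<lambda>x. f x / g x) t
           ((Df * g (rho T t) - f (rho T t) * Dg) / (g (sigma T t) * g (rho T t))))"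
proof -
  have tT: "t \<in> T" using assms(4)
    by (auto simp: T_kappa_kappa_def T_sub_kappa_def split: if_splits)
  note F = assms(5) and G = assms(6)
  have v: "has_sym_frac_deriv T \<alpha> (\<lambda>x. f x / g x) t
           ((Df * g (rho T t) - f (rho T t) * Dg) / (g (sigma T t) * g (rho T t)))"
    if cf: "continuous (at t within T) f" and cg: "continuous (at t within T) g"
      and nz: "g (sigma T t) * g (rho T t) \<noteq> 0"
  proof -
    have ng: "g (sigma T t) \<noteq> 0" "g (rho T t) \<noteq> 0" using nz by auto
    have h1: "has_sym_frac_deriv T \<alpha> (\<lambda>x. 1 / g x) t (- Dg / (g (sigma T t) * g (rho T t)))"
      using has_inv[OF tT G _ nz] cg by blast
    have cc: "sigma T t = t \<and> rho T t = t \<longrightarrow> continuous (at t within T) f \<and> continuous (at t within T) (\<lambda>x. 1 / g x)"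
    proof
      assume d: "sigma T t = t \<and> rho T t = t"
      then have gt: "g t \<noteq> 0" using ng by auto
      have "(g \<longlongrightarrow> g t) (at t within T)" using cg unfolding continuous_within .
      then have "((\<lambda>x. 1 / g x) \<longlongrightarrow> 1 / g t) (at t within T)"
        using gt by (intro tendsto_divide tendsto_const) auto
      then show "continuous (at t within T) f \<and> continuous (at t within T) (\<lambda>x. 1 / g x)"
        using cf unfolding continuous_within by simp
    qed
    have P: "has_sym_frac_deriv T \<alpha> (\<lambda>x. f x * (1 / g x)) t
      (Df * (1 / g (sigma T t)) + f (rho T t) * (- Dg / (g (sigma T t) * g (rho T t))))"
      by (rule has_prod[OF tT F h1 cc])
    have e1: "(\<lambda>x. f x * (1 / g x)) = (\<lambda>x. f x / g x)" by simp
    have e2: "Df * (1 / g (sigma T t)) + f (rho T t) * (- Dg / (g (sigma T t) * g (rho T t)))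
      = (Df * g (rho T t) - f (rho T t) * Dg) / (g (sigma T t) * g (rho T t))"
      using ng by (simp add: field_simps)
    show ?thesis using P unfolding e1 e2 .
  qed
  show ?thesis
    using has_sum[OF F G] has_scal[OF F, of c] has_prod[OF tT F G] has_inv[OF tT F] v
    by blast
qed

end
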